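(* Let $j\ge 1$, $\lambda\ge 1$, $s\ge 0$ be integers and let $w=w_{j,s,\lambda}$ be the leaf weight sequence defined in the context. Let $g=g_{j,s,\lambda}$ be the sequence defined by $g(n)=w(n)$ for $1\le n\le 3+2s+\lambda j$ and \[ g(n)=g\bigl(n-s-g(n-j)\bigr)+\lambda j\qquad (n>3+2s+\lambda j). \] Then this recursion is well defined for all positive integers $n$ (every argument $n-s-g(n-j)$ lies in $\{1,\dots,n-1\}$), and $g(n)=w(n)$ for every positive integer $n$.
   Context: Fix integers $j\ge1$, $\lambda\ge1$, $s\ge0$. Define a labeled infinite rooted tree $\mathcal K$ as follows. It has "supernodes" $S_0,S_1,S_2,\dots$ with an edge between $S_i$ and $S_{i+1}$ for every $i\ge0$ ($S_0$ is the root). $S_0$ has two further children: the "initial leaf" and a node $N_0$, which is a leaf. For each $i\ge1$, $S_i$ has a child $N_i$ (the "knot node"), and attached to $N_i$ are $\lambda$ chains, each a path of $i\cdot j$ nodes hanging from $N_i$; the last (bottom) node of each chain is a leaf. Each supernode carries $s$ labels and every other node carries exactly one label. The labels are the consecutive positive integers $1,2,3,\dots$, assigned in the following order: initial leaf, $S_0$, $N_0$; then for $i=1,2,3,\dots$: $S_i$ (its $s$ labels), $N_i$, then the nodes of the first chain of $N_i$ from top to bottom, then the second chain, ..., then the $\lambda$-th chain. The initial leaf has weight $1$; every other leaf of $\mathcal K$ (namely $N_0$ and the bottom node of each chain) has weight $j$. The leaf weight sequence $w(n)=w_{j,s,\lambda}(n)$ ($n\ge1$) is the total weight of the leaves of $\mathcal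 K$ whose label is $\le n$. Explicitly, $w(n)=1+j\cdot\#\{\ell\in L:\ell\le n\}$, where $L$ consists of the number $s+2$ together with the numbers $L_{i,c}=s+2+\sum_{l=1}^{i-1}(s+1+\lambda l j)+s+1+c\,i\,j$ for $i\ge1$, $1\le c\le\lambda$. *)

theory Defs
  imports Main
begin

definition Lic :: "nat \<Rightarrow> nat \<Rightarrow> nat \<Rightarrow> nat \<Rightarrow> nat \<Rightarrow> nat" where
  "Lic j s lam i c = s + 2 + (\<Sum>l = 1..i - 1. s + 1 + lam * l * j) + s + 1 + c * i * j"

definition Lset :: "nat \<Rightarrow> nat \<Rightarrow> nat \<Rightarrow> nat set" where
  "Lset j s lam = {s + 2} \<union> {Lic j s lam i c | i c. 1 \<le> i \<and> 1 \<le> c \<and> c \<le> lam}"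

definition wseq :: "nat \<Rightarrow> nat \<Rightarrow> nat \<Rightarrow> nat \<Rightarrow> nat" where
  "wseq j s lam n = 1 + j * card {l \<in> Lset j s lam. l \<le> n}"

end

theory Submission imports Defs begin

definition ll :: "nat \<Rightarrow> nat \<Rightarrow> nat \<Rightarrow> nat \<Rightarrow> nat" where
"ll j s lam q = (if q = 0 then s+2 else Lic j s lam ((q-1) div lam + 1) ((q-1) mod lam + 1))"

lemma Lic_step:
  assumes "1 \<le> i"
  shows "Lic j s lam (i+1) c = Lic j s lam i c + s + 1 + lam*i*j + c*j"
proof -
  obtain k where i: "i = Suc k" using assms by (cases i) auto
  have "(\<Sum>l = 1..i. s + 1 + lam * l * j) = (\<Sum>l = 1..k. s + 1 + lam * l * j) + (s+1+lam*i*j)"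
    using i by (simp add: sum.cl_ivl_Suc)
  then show ?thesis unfolding Lic_def using i by (simp add: algebra_simps)
qed

lemma Lic_one: "Lic j s lam (Suc 0) c = 2*s+3 + c*j"
  unfolding Lic_def by simp

lemma ll_step:
  assumes "1 \<le> lam"
  shows "ll j s lam (q+lam) = ll j s lam q + s + 1 + j*(q+lam)"
proof (cases "q = 0")
  case True
  have "(lam - 1) div lam = 0" "(lam-1) mod lam = lam - 1" using assms by auto
  then show ?thesis using True assms unfolding ll_def by (simp add: Lic_one)
next
  case False
  define i where "i = (q-1) div lam + 1"
  define c where "c = (q-1) mod lam + 1"
  have d: "(q + lam - 1) div lam = (q-1) div lam + 1" "(q + lam - 1) mod lam = (q-1) mod lam"
    using False assms by (simp_all add: Suc_diff_le[symmetric] div_add_self2 mod_add_self2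
      flip: add_diff_assoc2)
  have e: "lam * i + c = q + lam"
  proof -
    have "lam * ((q-1) div lam) + (q-1) mod lam = q - 1" by (rule mult_div_mod_eq)
    then show ?thesis using False unfolding i_def c_def by (simp add: algebra_simps)
  qed
  have "ll j s lam (q+lam) = Lic j s lam (i+1) c" unfolding ll_def i_def c_def using False d by simp
  also have "\<dots> = Lic j s lam i c + s + 1 + lam*i*j + c*j" by (rule Lic_step) (simp add: i_def)
  also have "lam*i*j + c*j = j*(q+lam)" using e by (metis add_mult_distrib mult.commute)
  hence "Lic j s lam i c + s + 1 + lam*i*j + c*j = Lic j s lam i c + s + 1 + j*(q+lam)" by simp
  finally show ?thesis unfolding ll_def i_def c_def using False by simp
qed

lemma ll_small:
  assumes "1 \<le> q" "q \<le> lam"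
  shows "ll j s lam q = 2*s+3 + q*j"
proof -
  have "(q-1) div lam = 0" "(q-1) mod lam = q - 1" using assms by auto
  then show ?thesis using assms unfolding ll_def by (simp add: Lic_one)
qed

lemma ll_gap:
  assumes "1 \<le> lam"
  shows "ll j s lam q + j \<le> ll j s lam (q+1)"
proof (induction q rule: less_induct)
  case (less q)
  show ?case
  proof (cases "q < lam")
    case True
    then show ?thesis
    proof (cases "q = 0")
      case True
      then show ?thesis using assms ll_small[of 1 lam j s] by (simp add: ll_def)
    next
      case False
      then show ?thesis using \<open>q < lam\<close> ll_small[of q lam j s] ll_small[of "q+1" lam j s] by simp
    qed
  next
    case False
    define r where "r = q - lam"
    have q: "q = r + lam" using False r_def by simp
    have "r < q" using q assms by simp
    then have ih: "ll j s lam r + j \<le> ll j s lam (r+1)" using less by blast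
    have "ll j s lam (q+1) = ll j s lam ((r+1) + lam)" using q by simp
    also have "\<dots> = ll j s lam (r+1) + s + 1 + j*(r+1+lam)" using ll_step[OF assms] by blast
    finally show ?thesis using q ll_step[OF assms, of j s r] ih by simp
  qed
qed

lemma ll_mono: "1 \<le> lam \<Longrightarrow> 1 \<le> j \<Longrightarrow> strict_mono (ll j s lam)"
  unfolding strict_mono_Suc_iff
proof
  fix n assume "1 \<le> lam" "1 \<le> j"
  then have "ll j s lam n + j \<le> ll j s lam (n+1)" using ll_gap by blast
  then show "ll j s lam n < ll j s lam (Suc n)" using \<open>1 \<le> j\<close> by simp
qed

lemma Lset_range:
  assumes "1 \<le> lam"
  shows "Lset j s lam = range (ll j s lam)"
proof
  show "Lset j s lam \<subseteq> range (ll j s lam)"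
  proof
    fix x assume "x \<in> Lset j s lam"
    then consider "x = s + 2" | i c where "x = Lic j s lam i c" "1 \<le> i" "1 \<le> c" "c \<le> lam"
      unfolding Lset_def by blast
    then show "x \<in> range (ll j s lam)"
    proof cases
      case 1 then show ?thesis by (metis ll_def rangeI)
    next
      case 2
      define q where "q = lam*(i-1) + c"
      have "(q-1) div lam = i - 1" "(q-1) mod lam = c - 1" using 2 assms unfolding q_def
        by (simp_all add: div_add1_eq mod_add_left_eq flip: add_diff_assoc)
      then have "ll j s lam q = x" using 2 unfolding ll_def q_def by auto
      then show ?thesis by (metis rangeI)
    qed
  qed
next
  show "range (ll j s lam) \<subseteq> Lset j s lam"
  proof
    fix x assume "x \<in> range (ll j s lam)"
    then obtain q where x: "x = ll j s lam q" by blast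
    show "x \<in> Lset j s lam"
    proof (cases "q = 0")
      case True then show ?thesis using x unfolding ll_def Lset_def by simp
    next
      case False
      have "(q-1) mod lam < lam" using assms by simp
      then have "1 \<le> (q-1) div lam + 1 \<and> 1 \<le> (q-1) mod lam + 1 \<and> (q-1) mod lam + 1 \<le> lam" by simp
      moreover have "x = Lic j s lam ((q-1) div lam + 1) ((q-1) mod lam + 1)" using x False unfolding ll_def by simp
      ultimately show ?thesis unfolding Lset_def by blast
    qed
  qed
qed

lemma count_eq:
  assumes "1 \<le> lam" "1 \<le> j" "ll j s lam p \<le> n" "n < ll j s lam (p+1)"
  shows "wseq j s lam n = 1 + j * (p+1)"
proof -
  have sm: "strict_mono (ll j s lam)" using ll_mono assms by blast
  have "{l \<in> Lset j s lam. l \<le> n} = ll j s lam ` {..p}"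
  proof
    show "{l \<in> Lset j s lam. l \<le> n} \<subseteq> ll j s lam ` {..p}"
    proof
      fix l assume "l \<in> {l \<in> Lset j s lam. l \<le> n}"
      then obtain q where q: "l = ll j s lam q" "ll j s lam q \<le> n" using Lset_range[OF assms(1)] by auto
      then have "ll j s lam q < ll j s lam (p+1)" using assms by simp
      then have "q < p + 1" using sm strict_mono_less by blast
      then show "l \<in> ll j s lam ` {..p}" using q by auto
    qed
  next
    show "ll j s lam ` {..p} \<subseteq> {l \<in> Lset j s lam. l \<le> n}"
    proof
      fix l assume "l \<in> ll j s lam ` {..p}"
      then obtain q where q: "l = ll j s lam q" "q \<le> p" by auto
      then have "ll j s lam q \<le> ll j s lam p" using sm strict_mono_less_eq by blast
      then show "l \<in> {l \<in> Lset j s lam. l \<le> n}" using q assms Lset_range[OF assms(1)] by auto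
    qed
  qed
  moreover have "card (ll j s lam ` {..p}) = p + 1"
    using card_image[OF strict_mono_imp_inj_on[OF sm]] by simp
  ultimately show ?thesis unfolding wseq_def by simp
qed

lemma key:
  assumes hj: "1 \<le> j" and hl: "1 \<le> lam" and hn: "n > 3 + 2*s + lam*j"
  shows "\<exists>m. n = m + s + wseq j s lam (n-j) \<and> 1 \<le> m \<and> wseq j s lam m + lam*j = wseq j s lam n"
proof -
  let ?l = "ll j s lam"
  have sm: "strict_mono ?l" using ll_mono hj hl by blast
  have lam: "?l lam = 2*s+3+lam*j" using ll_small[OF hl] by (simp add: mult.commute)
  have ex: "\<exists>k. n < ?l k"
  proof
    have "n + 1 \<le> ?l (n+1)" by (rule strict_mono_imp_increasing[OF sm])
    then show "n < ?l (n+1)" by simp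
  qed
  define k where "k = (LEAST k. n < ?l k)"
  have k1: "n < ?l k" unfolding k_def using ex by (rule LeastI_ex)
  have k2: "\<And>k'. k' < k \<Longrightarrow> \<not> n < ?l k'" unfolding k_def by (rule not_less_Least)
  have "\<not> k \<le> lam"
  proof
    assume "k \<le> lam"
    then have "?l k \<le> ?l lam" using sm strict_mono_less_eq by blast
    then show False using k1 lam hn by simp
  qed
  then have "lam < k" by simp
  then obtain p where kp: "k = p + 1" and plam: "lam \<le> p" by (intro that[of "k - 1"]) auto
  have np: "?l p \<le> n" using k2[of p] kp by simp
  have np1: "n < ?l (p+1)" using k1 kp by simp
  define q where "q = p - lam"
  have pq: "p = q + lam" using plam q_def by simp
  have st1: "?l p = ?l q + s + 1 + j*p" using ll_step[OF hl, of j s q] pq by simp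
  have st2: "?l (p+1) = ?l (q+1) + s + 1 + j*(p+1)" using ll_step[OF hl, of j s "q+1"] pq by simp
  have gq: "?l q + j \<le> ?l (q+1)" using ll_gap[OF hl] by blast
  have wn: "wseq j s lam n = 1 + j*(p+1)" using count_eq[OF hl hj np np1] .
  have jp: "j*(p+1) = j*p + j" by simp
  show ?thesis
  proof (cases "?l p + j \<le> n")
    case True
    have a1: "?l p \<le> n - j" "n - j < ?l (p+1)" using True np1 by linarith+
    have w1: "wseq j s lam (n-j) = 1 + j*(p+1)" using count_eq[OF hl hj a1] .
    define m where "m = n - ?l p + ?l q - j"
    have m1: "?l q \<le> m" "m < ?l (q+1)" using True np1 st1 st2 gq jp unfolding m_def by linarith+
    have wm: "wseq j s lam m = 1 + j*(q+1)" using count_eq[OF hl hj m1] .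
    have "n = m + s + wseq j s lam (n-j)" using w1 True st1 jp unfolding m_def by linarith
    moreover have "1 \<le> m" using m1 ll_def[of j s lam 0] sm strict_mono_less_eq[OF sm, of 0 q] by simp
    moreover have "wseq j s lam m + lam*j = wseq j s lam n" using wm wn pq by (simp add: algebra_simps)
    ultimately show ?thesis by blast
  next
    case False
    have p1: "1 \<le> p" using plam hl by simp
    have gp: "?l (p-1) + j \<le> ?l p" using ll_gap[OF hl, of j s "p-1"] p1 by simp
    have a1: "?l (p-1) \<le> n - j" "n - j < ?l (p-1+1)" using False np gp p1 by simp_all
    have w1: "wseq j s lam (n-j) = 1 + j*p" using count_eq[OF hl hj a1] p1 by simp
    define m where "m = n - ?l p + ?l q"
    have m1: "?l q \<le> m" "m < ?l (q+1)" using False np st1 gq unfolding m_def by linarith+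
    have wm: "wseq j s lam m = 1 + j*(q+1)" using count_eq[OF hl hj m1] .
    have "n = m + s + wseq j s lam (n-j)" using w1 np st1 unfolding m_def by linarith
    moreover have "1 \<le> m" using m1 ll_def[of j s lam 0] sm strict_mono_less_eq[OF sm, of 0 q] by simp
    moreover have "wseq j s lam m + lam*j = wseq j s lam n" using wm wn pq by (simp add: algebra_simps)
    ultimately show ?thesis by blast
  qed
qed


theorem theorem2p1:
  fixes j s lam :: nat and g :: "nat \<Rightarrow> int"
  assumes hj: "1 \<le> j" and hlam: "1 \<le> lam"
    and base: "\<And>n. 1 \<le> n \<Longrightarrow> n \<le> 3 + 2 * s + lam * j \<Longrightarrow> g n = int (wseq j s lam n)"
    and recur: "\<And>n. n > 3 + 2 * s + lam * j \<Longrightarrow>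
        1 \<le> int n - int s - g (n - j) \<Longrightarrow> int n - int s - g (n - j) \<le> int n - 1 \<Longrightarrow>
        g n = g (nat (int n - int s - g (n - j))) + int (lam * j)"
  shows "(\<forall>n > 3 + 2 * s + lam * j.
            1 \<le> int n - int s - g (n - j) \<and> int n - int s - g (n - j) \<le> int n - 1)
       \<and> (\<forall>n \<ge> 1. g n = int (wseq j s lam n))"
proof -
  have wpos: "\<And>x. 1 \<le> wseq j s lam x" unfolding wseq_def by simp
  have eq: "1 \<le> n \<Longrightarrow> g n = int (wseq j s lam n)" for n
  proof (induction n rule: less_induct)
    case (less n)
    show ?case
    proof (cases "n \<le> 3 + 2 * s + lam * j")
      case True then show ?thesis using base less.prems by blast
    next
      case False
      then have nN: "n > 3 + 2 * s + lam * j" by simp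
      obtain m where m: "n = m + s + wseq j s lam (n-j)" "1 \<le> m"
          "wseq j s lam m + lam*j = wseq j s lam n" using key[OF hj hlam nN] by blast
      have "lam * j \<ge> j" using hlam by simp
      then have "n - j < n" "1 \<le> n - j" using nN hj by linarith+
      then have gnj: "g (n-j) = int (wseq j s lam (n-j))" using less.IH by blast
      have im: "int n - int s - g (n - j) = int m" using m(1) gnj by simp
      have mn: "m < n" using m(1) wpos[of "n-j"] by linarith
      have "g n = g (nat (int m)) + int (lam * j)"
        using recur[OF nN] im m(2) mn by simp
      also have "\<dots> = int (wseq j s lam m) + int (lam*j)" using less.IH[OF mn m(2)] by simp
      also have "\<dots> = int (wseq j s lam n)" using m(3) by linarith
      finally show ?thesis .
    qed
  qed
  have part1: "1 \<le> int n - int s - g (n - j) \<and> int n - int s - g (n - j) \<le> int n - 1"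
    if nN: "n > 3 + 2 * s + lam * j" for n
  proof -
    obtain m where m: "n = m + s + wseq j s lam (n-j)" "1 \<le> m"
        "wseq j s lam m + lam*j = wseq j s lam n" using key[OF hj hlam nN] by blast
    have "lam * j \<ge> j" using hlam by simp
    then have "1 \<le> n - j" using nN hj by linarith
    then have gnj: "g (n-j) = int (wseq j s lam (n-j))" using eq by blast
    have im: "int n - int s - g (n - j) = int m" using m(1) gnj by simp
    have mn: "m < n" using m(1) wpos[of "n-j"] by linarith
    show ?thesis using im mn m(2) by simp
  qed
  show ?thesis using part1 eq by blast
qed

end
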